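(* The class AsLimSup is closed under $\max$, and the class PosLimInf is closed under $\min$.
   Context: A probabilistic weighted automaton over a finite alphabet $\Sigma$ is a tuple $A=(Q,\rho_I,\Sigma,\delta,\gamma)$ where $Q$ is a finite set of states, $\rho_I$ is a probability distribution on $Q$, $\delta:Q\times\Sigma\to\mathcal D(Q)$ assigns to each state and letter a probability distribution on $Q$, and $\gamma:Q\times\Sigma\times Q\to\mathbb Q$ is a weight function. A run over an infinite word $w=\sigma_1\sigma_2\dots$ is a sequence $r=q_0\sigma_1q_1\sigma_2\dots$ with $\rho_I(q_0)>0$ and $\delta(q_i,\sigma_{i+1})(q_{i+1})>0$ for all $i$; its weight sequence is $\gamma(r)=v_0v_1\dots$ with $v_i=\gamma(q_i,\sigma_{i+1},q_{i+1})$. For each $w$, the probabilities of finite run prefixes induce a probability measure $\mathbb P^A$ on runs over $w$. For a value function $\mathrm{Val}$, positive semantics: $L^{>0}_A(w)=\sup\{\eta\mid \mathbb P^A(\{r:\mathrm{Val}(\gamma(r))\ge\eta\})>0\}$; almost-sure semantics: $L^{=1}_A(w)=\sup\{\eta\mid \mathbb P^A(\{r:\mathrm{Val}(\gamma(r))\ge\eta\})=1\}$. $\mathsf{LimSup}(v)=\limsup_n v_n$, $\mathsf{LimInf}(v)=\liminf_n v_n$. AsLimSup is the class of $\mathsf{LimSup}$-automata under almost-sure semantics; PosLimInf is the class of $\mathsf{LimInf}$-automata under positive semantics. A class $\mathcal C$ is closed under $\max$ (resp. $\min$) if for any $A_1,A_2\in\mathcal C$ over the same alphabet there is $A\in\mathcal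 C$ with $L_A(w)=\max\{L_{A_1}(w),L_{A_2}(w)\}$ (resp. $\min$) for all words $w$. *)

theory Defs
  imports "HOL-Probability.Probability"
begin

text \<open>States are drawn
from nat (any finite state set is isomorphic to a finite subset of nat), the
state set is the finite set pwa_states.\<close>

record 'a pwa =
  pwa_states :: "nat set"
  pwa_init   :: "nat pmf"
  pwa_trans  :: "nat \<Rightarrow> 'a \<Rightarrow> nat pmf"
  pwa_weight :: "nat \<Rightarrow> 'a \<Rightarrow> nat \<Rightarrow> rat"

definition wf_pwa :: "'a pwa \<Rightarrow> bool" where
  "wf_pwa A \<longleftrightarrow> finite (pwa_states A) \<and> set_pmf (pwa_init A) \<subseteq> pwa_states A \<and>
     (\<forall>q\<in>pwa_states A. \<forall>\<sigma>. set_pmf (pwa_trans A q \<sigma>) \<subseteq> pwa_states A)"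

text \<open>Infinite words are w :: nat => 'a, where w i is the letter sigma_(i+1).
Runs are state sequences r :: nat => nat, r i = q_i.\<close>

definition run_space :: "(nat \<Rightarrow> nat) measure" where
  "run_space = PiM UNIV (\<lambda>_::nat. count_space (UNIV :: nat set))"

definition prefix_prob :: "'a pwa \<Rightarrow> (nat \<Rightarrow> 'a) \<Rightarrow> nat list \<Rightarrow> real" where
  "prefix_prob A w qs = (case qs of [] \<Rightarrow> 1
     | q0 # _ \<Rightarrow> pmf (pwa_init A) q0 *
          (\<Prod>i<length qs - 1. pmf (pwa_trans A (qs ! i) (w i)) (qs ! Suc i)))"

definition run_measure :: "'a pwa \<Rightarrow> (nat \<Rightarrow> 'a) \<Rightarrow> (nat \<Rightarrow> nat) measure" where
  "run_measure A w = (THE M. sets M = sets run_space \<and>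
     (\<forall>qs. emeasure M {r \<in> space M. \<forall>i<length qs. r i = qs ! i}
              = ennreal (prefix_prob A w qs)))"

definition weight_seq :: "'a pwa \<Rightarrow> (nat \<Rightarrow> 'a) \<Rightarrow> (nat \<Rightarrow> nat) \<Rightarrow> nat \<Rightarrow> real" where
  "weight_seq A w r i = real_of_rat (pwa_weight A (r i) (w i) (r (Suc i)))"

definition LimSupVal :: "(nat \<Rightarrow> real) \<Rightarrow> ereal" where
  "LimSupVal v = limsup (\<lambda>n. ereal (v n))"

definition LimInfVal :: "(nat \<Rightarrow> real) \<Rightarrow> ereal" where
  "LimInfVal v = liminf (\<lambda>n. ereal (v n))"

definition lang_pos :: "((nat \<Rightarrow> real) \<Rightarrow> ereal) \<Rightarrow> 'a pwa \<Rightarrow> (nat \<Rightarrow> 'a) \<Rightarrow> ereal" where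
  "lang_pos Val A w = Sup (ereal ` {\<eta>::real.
      emeasure (run_measure A w) {r \<in> space (run_measure A w). Val (weight_seq A w r) \<ge> ereal \<eta>} > 0})"

definition lang_as :: "((nat \<Rightarrow> real) \<Rightarrow> ereal) \<Rightarrow> 'a pwa \<Rightarrow> (nat \<Rightarrow> 'a) \<Rightarrow> ereal" where
  "lang_as Val A w = Sup (ereal ` {\<eta>::real.
      emeasure (run_measure A w) {r \<in> space (run_measure A w). Val (weight_seq A w r) \<ge> ereal \<eta>} = 1})"

end

theory Submission
  imports Defs
begin


definition cyl :: "nat list \<Rightarrow> (nat \<Rightarrow> nat) set" where
  "cyl qs = {r. \<forall>i<length qs. r i = qs ! i}"

lemma space_run_space[simp]: "space run_space = UNIV"
  by (auto simp: run_space_def space_PiM)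

lemma sets_cyl[measurable]: "cyl qs \<in> sets run_space"
proof -
  have "cyl qs = (\<Inter>i\<in>{..<length qs}. {r \<in> space run_space. r i = qs ! i}) \<inter> space run_space"
    by (auto simp: cyl_def)
  also have "\<dots> \<in> sets run_space"
    unfolding run_space_def by measurable
  finally show ?thesis .
qed

definition cylG :: "(nat \<Rightarrow> nat) set set" where
  "cylG = insert {} (range cyl)"

lemma cylG_Int_stable: "Int_stable cylG"
proof (rule Int_stableI)
  fix a b assume a: "a \<in> cylG" and b: "b \<in> cylG"
  show "a \<inter> b \<in> cylG"
  proof (cases "a = {} \<or> b = {}")
    case True thus ?thesis using a b by (auto simp: cylG_def)
  next
    case False
    then obtain ps qs where ab: "a = cyl ps" "b = cyl qs" using a b by (auto simp: cylG_def)
    show ?thesis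
    proof (cases "a \<inter> b = {}")
      case True thus ?thesis by (simp add: cylG_def)
    next
      case False
      then obtain r where r: "r \<in> cyl ps" "r \<in> cyl qs" using ab by auto
      have "a \<inter> b = cyl (map r [0..<max (length ps) (length qs)])"
        using r unfolding ab cyl_def
        by (auto simp: nth_map) (metis less_max_iff_disj)+
      thus ?thesis by (simp add: cylG_def)
    qed
  qed
qed

lemma coord_in_gen: "{f::nat\<Rightarrow>nat. f i \<in> A} \<in> sigma_sets UNIV cylG"
proof -
      let ?B = "cyl ` {qs. length qs = Suc i \<and> qs ! i \<in> A}"
      have eq: "{f. f i \<in> A} = \<Union>?B"
      proof safe
        fix f assume "f i \<in> A"
        thus "f \<in> \<Union>?B"
          by (intro UnionI[of "cyl (map f [0..<Suc i])"] imageI) (auto simp: cyl_def simp del: upt_Suc)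
      next
        fix f qs assume "f \<in> cyl qs" "length qs = Suc i" "qs ! i \<in> A"
        thus "f i \<in> A" by (auto simp: cyl_def)
      qed
      have "countable ?B"
        by (rule countable_image, rule countable_subset[of _ "lists UNIV"]) auto
      hence "\<Union>?B \<in> sigma_sets UNIV cylG"
        by (rule sigma_sets_UNION) (auto simp: cylG_def intro: sigma_sets.Basic)
      thus "{f. f i \<in> A} \<in> sigma_sets UNIV cylG" using eq by simp
qed

lemma sets_run_space_gen: "sets run_space = sigma_sets UNIV cylG"
proof
  show "sigma_sets UNIV cylG \<subseteq> sets run_space"
    proof -
    have "cylG \<subseteq> sets run_space" by (auto simp: cylG_def)
    from sets.sigma_sets_subset'[OF this, of UNIV] sets.top[of run_space]
    show ?thesis by simp
  qed
next
  have "sets run_space = sigma_sets UNIV {{f. f i \<in> A} | i A. True}"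
    unfolding run_space_def sets_PiM_single apply simp done
  also have "\<dots> \<subseteq> sigma_sets UNIV cylG"
    by (rule sigma_sets_mono) (use coord_in_gen in auto)
  finally show "sets run_space \<subseteq> sigma_sets UNIV cylG" .
qed



definition RMf :: "'a pwa \<Rightarrow> (nat \<Rightarrow> 'a) \<Rightarrow> nat \<times> nat \<Rightarrow> nat measure" where
  "RMf A w = (\<lambda>(i,q). measure_pmf (if i = 0 then pwa_init A else pwa_trans A q (w (i - 1))))"

definition RM :: "'a pwa \<Rightarrow> (nat \<Rightarrow> 'a) \<Rightarrow> (nat \<times> nat \<Rightarrow> nat) measure" where
  "RM A w = PiM UNIV (RMf A w)"

fun Rmap :: "(nat \<times> nat \<Rightarrow> nat) \<Rightarrow> nat \<Rightarrow> nat" where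
  "Rmap \<omega> 0 = \<omega> (0,0)"
| "Rmap \<omega> (Suc i) = \<omega> (Suc i, Rmap \<omega> i)"

lemma space_RMf[simp]: "space (RMf A w j) = UNIV"
  by (auto simp: RMf_def split: prod.splits)

lemma sets_RMf[simp]: "sets (RMf A w j) = UNIV"
  by (auto simp: RMf_def split: prod.splits)

lemma space_RM[simp]: "space (RM A w) = UNIV"
  by (auto simp: RM_def space_PiM)

lemma prob_RM: "prob_space (RM A w)"
  unfolding RM_def by (rule prob_space_PiM) (auto simp: RMf_def prob_space_measure_pmf split: prod.splits)

lemma Rmap_coord_meas: "(\<lambda>\<omega>. Rmap \<omega> i) \<in> RM A w \<rightarrow>\<^sub>M count_space UNIV"
proof (induction i)
  case 0
  have "(\<lambda>\<omega>. \<omega> (0,0)) \<in> RM A w \<rightarrow>\<^sub>M RMf A w (0,0)"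
    unfolding RM_def by (rule measurable_component_singleton) simp
  thus ?case by (simp add: measurable_def)
next
  case (Suc i)
  have "(\<lambda>\<omega>. (\<lambda>q \<omega>. \<omega> (Suc i, q)) (Rmap \<omega> i) \<omega>) \<in> RM A w \<rightarrow>\<^sub>M count_space UNIV"
  proof (rule measurable_compose_countable'[OF _ Suc])
    fix q :: nat
    have "(\<lambda>\<omega>. \<omega> (Suc i, q)) \<in> RM A w \<rightarrow>\<^sub>M RMf A w (Suc i, q)"
      unfolding RM_def by (rule measurable_component_singleton) simp
    thus "(\<lambda>\<omega>. \<omega> (Suc i, q)) \<in> RM A w \<rightarrow>\<^sub>M count_space UNIV" by (simp add: measurable_def)
  qed simp
  thus ?case by simp
qed

lemma Rmap_meas: "Rmap \<in> RM A w \<rightarrow>\<^sub>M run_space"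
proof -
  have "(\<lambda>\<omega> i. Rmap \<omega> i) \<in> RM A w \<rightarrow>\<^sub>M run_space"
    unfolding run_space_def
    by (rule measurable_PiM_single') (auto intro: Rmap_coord_meas)
  thus ?thesis by simp
qed

lemma Rmap_iff:
  assumes "k < length qs"
  shows "(\<forall>i\<le>k. Rmap \<omega> i = qs ! i) \<longleftrightarrow>
     \<omega> (0,0) = qs ! 0 \<and> (\<forall>i<k. \<omega> (Suc i, qs ! i) = qs ! Suc i)"
  using assms
proof (induction k)
  case 0 thus ?case by simp
next
  case (Suc k)
  have "(\<forall>i\<le>Suc k. Rmap \<omega> i = qs ! i) \<longleftrightarrow> (\<forall>i\<le>k. Rmap \<omega> i = qs ! i) \<and> Rmap \<omega> (Suc k) = qs ! Suc k"
    by (auto simp: le_Suc_eq)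
  also have "\<dots> \<longleftrightarrow> (\<forall>i\<le>k. Rmap \<omega> i = qs ! i) \<and> \<omega> (Suc k, qs ! k) = qs ! Suc k"
    by auto
  also have "\<dots> \<longleftrightarrow> \<omega> (0,0) = qs ! 0 \<and> (\<forall>i<Suc k. \<omega> (Suc i, qs ! i) = qs ! Suc i)"
    using Suc by (auto simp: less_Suc_eq)
  finally show ?case .
qed

lemma prefix_prob_Cons: "qs = q0 # rest \<Longrightarrow> prefix_prob A w qs =
   pmf (pwa_init A) q0 * (\<Prod>i<length qs - 1. pmf (pwa_trans A (qs!i) (w i)) (qs ! Suc i))"
  by (simp add: prefix_prob_def)

lemma cyl_preimage_measure:
  "emeasure (RM A w) (Rmap -` cyl qs \<inter> space (RM A w)) = ennreal (prefix_prob A w qs)"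
proof (cases qs)
  case Nil
  then show ?thesis using prob_space.emeasure_space_1[OF prob_RM]
    by (simp add: cyl_def prefix_prob_def)
next
  case (Cons q0 rest)
  define n where "n = length qs"
  have n: "n > 0" using Cons by (simp add: n_def)
  define g where "g = (\<lambda>i::nat. (Suc i, qs ! i))"
  define J where "J = insert (0,0) (g ` {..<n - 1})"
  define X where "X = (\<lambda>j::nat\<times>nat. case j of (0,_) \<Rightarrow> {q0} | (Suc i, _) \<Rightarrow> {qs ! Suc i})"
  have "Rmap -` cyl qs \<inter> space (RM A w) = prod_emb UNIV (RMf A w) J (PiE J X)"
  proof (intro equalityI subsetI)
    fix \<omega> assume om: "\<omega> \<in> Rmap -` cyl qs \<inter> space (RM A w)"
    have "\<forall>i\<le>n-1. Rmap \<omega> i = qs ! i"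
    proof (intro allI impI)
      fix i assume "i \<le> n - 1"
      with n have "i < n" by linarith
      thus "Rmap \<omega> i = qs ! i" using om by (simp add: cyl_def n_def)
    qed
    hence *: "\<omega> (0,0) = q0 \<and> (\<forall>i<n-1. \<omega> (Suc i, qs ! i) = qs ! Suc i)"
      using Rmap_iff[of "n-1" qs \<omega>] n Cons by (simp add: n_def)
    show "\<omega> \<in> prod_emb UNIV (RMf A w) J (PiE J X)"
      using * by (auto simp: prod_emb_iff J_def X_def g_def)
  next
    fix \<omega> assume "\<omega> \<in> prod_emb UNIV (RMf A w) J (PiE J X)"
    hence "\<omega> (0,0) = q0 \<and> (\<forall>i<n-1. \<omega> (Suc i, qs ! i) = qs ! Suc i)"
      by (auto simp: prod_emb_iff J_def X_def g_def PiE_iff)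
    hence "\<forall>i\<le>n-1. Rmap \<omega> i = qs ! i"
      using Rmap_iff[of "n-1" qs \<omega>] n Cons by (simp add: n_def)
    hence "\<forall>i<n. Rmap \<omega> i = qs ! i" using n by (auto simp: less_eq_Suc_le Suc_le_eq[symmetric])
    thus "\<omega> \<in> Rmap -` cyl qs \<inter> space (RM A w)" by (simp add: cyl_def n_def)
  qed
  also have "emeasure (RM A w) \<dots> = (\<Prod>j\<in>J. emeasure (RMf A w j) (X j))"
    unfolding RM_def
    by (rule emeasure_PiM_emb) (auto simp: J_def RMf_def prob_space_measure_pmf split: prod.splits)
  also have "\<dots> = emeasure (RMf A w (0,0)) (X (0,0)) * (\<Prod>i<n-1. emeasure (RMf A w (g i)) (X (g i)))"
  proof -
    have "inj_on g {..<n-1}" by (auto simp: g_def inj_on_def)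
    moreover have "(0,0) \<notin> g ` {..<n-1}" by (auto simp: g_def)
    ultimately show ?thesis unfolding J_def by (simp add: prod.reindex)
  qed
  also have "\<dots> = ennreal (pmf (pwa_init A) q0) * (\<Prod>i<n-1. ennreal (pmf (pwa_trans A (qs ! i) (w i)) (qs ! Suc i)))"
  proof -
    have e1: "emeasure (RMf A w (0,0)) (X (0,0)) = ennreal (pmf (pwa_init A) q0)"
      by (simp add: RMf_def X_def emeasure_pmf_single)
    have e2: "\<And>i. emeasure (RMf A w (g i)) (X (g i)) = ennreal (pmf (pwa_trans A (qs ! i) (w i)) (qs ! Suc i))"
      by (simp add: RMf_def X_def g_def emeasure_pmf_single)
    show ?thesis by (simp only: e1 e2)
  qed
  also have "\<dots> = ennreal (prefix_prob A w qs)"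
    by (simp add: prefix_prob_Cons[OF Cons] n_def prod_ennreal ennreal_mult prod_nonneg)
  finally show ?thesis .
qed



definition goodM :: "'a pwa \<Rightarrow> (nat \<Rightarrow> 'a) \<Rightarrow> (nat \<Rightarrow> nat) measure \<Rightarrow> bool" where
  "goodM A w M \<longleftrightarrow> sets M = sets run_space \<and>
     (\<forall>qs. emeasure M {r \<in> space M. \<forall>i<length qs. r i = qs ! i} = ennreal (prefix_prob A w qs))"

lemma goodM_iff: "goodM A w M \<longleftrightarrow> sets M = sets run_space \<and> (\<forall>qs. emeasure M (cyl qs) = ennreal (prefix_prob A w qs))"
proof -
  have "sets M = sets run_space \<Longrightarrow> space M = UNIV"
    using sets_eq_imp_space_eq[of M run_space] by simp
  thus ?thesis unfolding goodM_def cyl_def by auto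
qed

lemma goodM_unique:
  assumes "goodM A w M" "goodM A w N" shows "M = N"
proof -
  have M: "sets M = sigma_sets UNIV cylG" "\<And>qs. emeasure M (cyl qs) = ennreal (prefix_prob A w qs)"
    using assms(1) sets_run_space_gen by (auto simp: goodM_iff)
  have N: "sets N = sigma_sets UNIV cylG" "\<And>qs. emeasure N (cyl qs) = ennreal (prefix_prob A w qs)"
    using assms(2) sets_run_space_gen by (auto simp: goodM_iff)
  have cU: "cyl [] = UNIV" by (simp add: cyl_def)
  show ?thesis
  proof (rule measure_eqI_generator_eq[OF cylG_Int_stable _ _ M(1) N(1), where A="\<lambda>_. UNIV"])
    show "cylG \<subseteq> Pow UNIV" by simp
    fix X assume "X \<in> cylG"
    thus "emeasure M X = emeasure N X" using M(2) N(2) by (auto simp: cylG_def)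
  next
    show "range (\<lambda>_. UNIV) \<subseteq> cylG" using cU by (auto simp: cylG_def)
  next
    show "(\<Union>i. UNIV) = UNIV" by simp
  next
    fix i :: nat show "emeasure M UNIV \<noteq> \<infinity>" using M(2)[of "[]"] cU by simp
  qed
qed

lemma goodM_distr: "goodM A w (distr (RM A w) run_space Rmap)"
  unfolding goodM_iff
  using cyl_preimage_measure[of A w] by (simp add: emeasure_distr[OF Rmap_meas sets_cyl])

lemma run_measure_eq: "goodM A w M \<Longrightarrow> run_measure A w = M"
  unfolding run_measure_def goodM_def[symmetric]
  by (rule the_equality) (auto intro: goodM_unique)

lemma run_measure_good: "goodM A w (run_measure A w)"
  using run_measure_eq[OF goodM_distr[of A w]] goodM_distr[of A w] by simp

lemma sets_run_measure[simp, measurable_cong]: "sets (run_measure A w) = sets run_space"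
  using run_measure_good[of A w] by (simp add: goodM_iff)

lemma space_run_measure[simp]: "space (run_measure A w) = UNIV"
  using sets_eq_imp_space_eq[OF sets_run_measure] by simp

lemma prob_run_measure: "prob_space (run_measure A w)"
proof -
  interpret prob_space "RM A w" by (rule prob_RM)
  show ?thesis unfolding run_measure_eq[OF goodM_distr]
    by (rule prob_space_distr[OF Rmap_meas])
qed

lemma emeasure_run_measure_cyl: "emeasure (run_measure A w) (cyl qs) = ennreal (prefix_prob A w qs)"
  using run_measure_good[of A w] by (simp add: goodM_iff)



definition prodA :: "(rat \<Rightarrow> rat \<Rightarrow> rat) \<Rightarrow> 'a pwa \<Rightarrow> 'a pwa \<Rightarrow> 'a pwa" where
  "prodA f A1 A2 = \<lparr>pwa_states = prod_encode ` (pwa_states A1 \<times> pwa_states A2),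
     pwa_init = map_pmf prod_encode (pair_pmf (pwa_init A1) (pwa_init A2)),
     pwa_trans = (\<lambda>q \<sigma>. map_pmf prod_encode (pair_pmf (pwa_trans A1 (fst (prod_decode q)) \<sigma>)
                                                     (pwa_trans A2 (snd (prod_decode q)) \<sigma>))),
     pwa_weight = (\<lambda>q \<sigma> q'. f (pwa_weight A1 (fst (prod_decode q)) \<sigma> (fst (prod_decode q')))
                               (pwa_weight A2 (snd (prod_decode q)) \<sigma> (snd (prod_decode q'))))\<rparr>"

lemma wf_prodA: "wf_pwa A1 \<Longrightarrow> wf_pwa A2 \<Longrightarrow> wf_pwa (prodA f A1 A2)"
  unfolding wf_pwa_def prodA_def
  by (fastforce simp: prod_encode_inverse)

lemma pmf_enc_pair: "pmf (map_pmf prod_encode (pair_pmf p1 p2)) q = pmf p1 (fst (prod_decode q)) * pmf p2 (snd (prod_decode q))"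
proof -
  have "pmf (map_pmf prod_encode (pair_pmf p1 p2)) q = pmf (map_pmf prod_encode (pair_pmf p1 p2)) (prod_encode (prod_decode q))"
    by simp
  also have "\<dots> = pmf (pair_pmf p1 p2) (prod_decode q)"
    by (rule pmf_map_inj') (rule inj_prod_encode)
  also have "\<dots> = pmf p1 (fst (prod_decode q)) * pmf p2 (snd (prod_decode q))"
    by (metis pmf_pair prod.collapse)
  finally show ?thesis .
qed

definition d1 :: "nat list \<Rightarrow> nat list" where "d1 qs = map (\<lambda>q. fst (prod_decode q)) qs"
definition d2 :: "nat list \<Rightarrow> nat list" where "d2 qs = map (\<lambda>q. snd (prod_decode q)) qs"

lemma prefix_prob_prodA:
  "prefix_prob (prodA f A1 A2) w qs = prefix_prob A1 w (d1 qs) * prefix_prob A2 w (d2 qs)"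
proof (cases qs)
  case Nil thus ?thesis by (simp add: prefix_prob_def d1_def d2_def)
next
  case (Cons q0 rest)
  have c1: "d1 qs = fst (prod_decode q0) # map (\<lambda>q. fst (prod_decode q)) rest" by (simp add: d1_def Cons)
  have c2: "d2 qs = snd (prod_decode q0) # map (\<lambda>q. snd (prod_decode q)) rest" by (simp add: d2_def Cons)
  have L: "length (d1 qs) = length qs" "length (d2 qs) = length qs" by (simp_all add: d1_def d2_def)
  have "prefix_prob (prodA f A1 A2) w qs =
     (pmf (pwa_init A1) (fst (prod_decode q0)) * pmf (pwa_init A2) (snd (prod_decode q0))) *
     (\<Prod>i<length qs - 1. pmf (pwa_trans A1 (d1 qs ! i) (w i)) (d1 qs ! Suc i) *
                          pmf (pwa_trans A2 (d2 qs ! i) (w i)) (d2 qs ! Suc i))"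
    unfolding prefix_prob_Cons[OF Cons]
    by (intro arg_cong2[where f="(*)"] prod.cong refl)
       (simp_all add: prodA_def pmf_enc_pair d1_def d2_def)
  also have "\<dots> = prefix_prob A1 w (d1 qs) * prefix_prob A2 w (d2 qs)"
    unfolding prefix_prob_Cons[OF c1] prefix_prob_Cons[OF c2] L
    by (simp add: prod.distrib c1 c2 algebra_simps del: list.map)
  finally show ?thesis .
qed

lemma prefix_prob_nonneg: "0 \<le> prefix_prob A w qs"
  by (simp add: prefix_prob_def prod_nonneg split: list.splits)

definition Phi :: "(nat \<Rightarrow> nat) \<times> (nat \<Rightarrow> nat) \<Rightarrow> nat \<Rightarrow> nat" where
  "Phi x = (\<lambda>i. prod_encode (fst x i, snd x i))"

lemma Phi_cyl: "Phi -` cyl qs = cyl (d1 qs) \<times> cyl (d2 qs)"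
proof -
  have "\<And>a b q. (prod_encode (a,b) = q) \<longleftrightarrow> a = fst (prod_decode q) \<and> b = snd (prod_decode q)"
    by (metis fst_conv snd_conv prod.collapse prod_decode_inverse prod_encode_inverse)
  thus ?thesis by (auto simp: Phi_def cyl_def d1_def d2_def)
qed

lemma coord_meas_pair:
  "(\<lambda>x. fst x i) \<in> (run_measure A1 w \<Otimes>\<^sub>M run_measure A2 w) \<rightarrow>\<^sub>M count_space UNIV"
  "(\<lambda>x. snd x i) \<in> (run_measure A1 w \<Otimes>\<^sub>M run_measure A2 w) \<rightarrow>\<^sub>M count_space UNIV"
proof -
  have c: "(\<lambda>r. r i) \<in> run_space \<rightarrow>\<^sub>M count_space UNIV"
    unfolding run_space_def by (rule measurable_component_singleton) simp
  have c1: "(\<lambda>r. r i) \<in> run_measure A1 w \<rightarrow>\<^sub>M count_space UNIV"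
    using c by (simp add: measurable_def)
  have c2: "(\<lambda>r. r i) \<in> run_measure A2 w \<rightarrow>\<^sub>M count_space UNIV"
    using c by (simp add: measurable_def)
  show "(\<lambda>x. fst x i) \<in> (run_measure A1 w \<Otimes>\<^sub>M run_measure A2 w) \<rightarrow>\<^sub>M count_space UNIV"
    using measurable_comp[OF measurable_fst c1] by (simp add: comp_def)
  show "(\<lambda>x. snd x i) \<in> (run_measure A1 w \<Otimes>\<^sub>M run_measure A2 w) \<rightarrow>\<^sub>M count_space UNIV"
    using measurable_comp[OF measurable_snd c2] by (simp add: comp_def)
qed

lemma Phi_meas: "Phi \<in> (run_measure A1 w \<Otimes>\<^sub>M run_measure A2 w) \<rightarrow>\<^sub>M run_space"
proof -
  let ?P = "run_measure A1 w \<Otimes>\<^sub>M run_measure A2 w"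
  have "(\<lambda>x i. prod_encode (fst x i, snd x i)) \<in> ?P \<rightarrow>\<^sub>M run_space"
    unfolding run_space_def
  proof (rule measurable_PiM_single')
    fix i :: nat
    show "(\<lambda>x. prod_encode (fst x i, snd x i)) \<in> ?P \<rightarrow>\<^sub>M count_space UNIV"
    proof (rule measurable_compose_countable'[where g="\<lambda>x. fst x i" and f="\<lambda>a x. prod_encode (a, snd x i)"])
      fix a :: nat
      show "(\<lambda>x. prod_encode (a, snd x i)) \<in> ?P \<rightarrow>\<^sub>M count_space UNIV"
        by (rule measurable_compose_countable'[where g="\<lambda>x. snd x i" and f="\<lambda>b x. prod_encode (a, b)"])
           (auto intro: coord_meas_pair)
    qed (auto intro: coord_meas_pair)
  qed simp
  thus ?thesis by (simp add: Phi_def[abs_def])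
qed

lemma run_measure_prodA:
  "run_measure (prodA f A1 A2) w = distr (run_measure A1 w \<Otimes>\<^sub>M run_measure A2 w) run_space Phi"
proof (rule run_measure_eq, unfold goodM_iff, intro conjI allI)
  show "sets (distr (run_measure A1 w \<Otimes>\<^sub>M run_measure A2 w) run_space Phi) = sets run_space" by simp
  fix qs
  interpret p2: prob_space "run_measure A2 w" by (rule prob_run_measure)
  have "emeasure (distr (run_measure A1 w \<Otimes>\<^sub>M run_measure A2 w) run_space Phi) (cyl qs)
      = emeasure (run_measure A1 w \<Otimes>\<^sub>M run_measure A2 w) (cyl (d1 qs) \<times> cyl (d2 qs))"
    by (simp add: emeasure_distr[OF Phi_meas sets_cyl] Phi_cyl space_pair_measure)
  also have "\<dots> = emeasure (run_measure A1 w) (cyl (d1 qs)) * emeasure (run_measure A2 w) (cyl (d2 qs))"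
    by (rule p2.emeasure_pair_measure_Times) simp_all
  also have "\<dots> = ennreal (prefix_prob (prodA f A1 A2) w qs)"
    by (simp add: emeasure_run_measure_cyl prefix_prob_prodA ennreal_mult prefix_prob_nonneg)
  finally show "emeasure (distr (run_measure A1 w \<Otimes>\<^sub>M run_measure A2 w) run_space Phi) (cyl qs) = ennreal (prefix_prob (prodA f A1 A2) w qs)" .
qed

lemma weight_seq_prodA:
  "weight_seq (prodA f A1 A2) w (Phi (r1, r2)) i =
     real_of_rat (f (pwa_weight A1 (r1 i) (w i) (r1 (Suc i))) (pwa_weight A2 (r2 i) (w i) (r2 (Suc i))))"
  by (simp add: weight_seq_def prodA_def Phi_def)



lemma ws_meas: "(\<lambda>r. weight_seq A w r i) \<in> borel_measurable run_space"
proof -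
  have c: "\<And>j. (\<lambda>r. r j) \<in> run_space \<rightarrow>\<^sub>M count_space UNIV"
    unfolding run_space_def by (rule measurable_component_singleton) simp
  have "(\<lambda>r. (\<lambda>a r. real_of_rat (pwa_weight A a (w i) (r (Suc i)))) (r i) r) \<in> borel_measurable run_space"
  proof (rule measurable_compose_countable'[where g="\<lambda>r. r i" and f="\<lambda>a r. real_of_rat (pwa_weight A a (w i) (r (Suc i)))" and I=UNIV])
    fix a
    show "(\<lambda>r. real_of_rat (pwa_weight A a (w i) (r (Suc i)))) \<in> borel_measurable run_space"
      by (rule measurable_compose_countable'[where g="\<lambda>r. r (Suc i)" and f="\<lambda>b r. real_of_rat (pwa_weight A a (w i) b)" and I=UNIV]) (auto intro: c)
  qed (auto intro: c)
  thus ?thesis by (simp add: weight_seq_def)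
qed

lemma VS_meas: "(\<lambda>r. LimSupVal (weight_seq A w r)) \<in> borel_measurable run_space"
  unfolding LimSupVal_def using ws_meas[of A w] by measurable

lemma VI_meas: "(\<lambda>r. LimInfVal (weight_seq A w r)) \<in> borel_measurable run_space"
  unfolding LimInfVal_def using ws_meas[of A w] by measurable

lemma Ev_setsS: "{r. ereal \<eta> \<le> LimSupVal (weight_seq A w r)} \<in> sets run_space"
proof -
  have [measurable]: "(\<lambda>r. LimSupVal (weight_seq A w r)) \<in> borel_measurable run_space" by (rule VS_meas)
  have "{r \<in> space run_space. ereal \<eta> \<le> LimSupVal (weight_seq A w r)} \<in> sets run_space" by measurable
  thus ?thesis by simp
qed

lemma Ev_setsI: "{r. ereal \<eta> \<le> LimInfVal (weight_seq A w r)} \<in> sets run_space"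
proof -
  have [measurable]: "(\<lambda>r. LimInfVal (weight_seq A w r)) \<in> borel_measurable run_space" by (rule VI_meas)
  have "{r \<in> space run_space. ereal \<eta> \<le> LimInfVal (weight_seq A w r)} \<in> sets run_space" by measurable
  thus ?thesis by simp
qed

lemma limsup_max_ereal:
  fixes X Y :: "nat \<Rightarrow> ereal"
  shows "limsup (\<lambda>n. max (X n) (Y n)) = max (limsup X) (limsup Y)"
proof (rule antisym)
  show "max (limsup X) (limsup Y) \<le> limsup (\<lambda>n. max (X n) (Y n))"
    by (intro max.boundedI Limsup_mono) auto
  show "limsup (\<lambda>n. max (X n) (Y n)) \<le> max (limsup X) (limsup Y)"
    unfolding Limsup_le_iff
  proof (intro allI impI)
    fix y assume "max (limsup X) (limsup Y) < y"
    hence "eventually (\<lambda>n. X n < y) sequentially" "eventually (\<lambda>n. Y n < y) sequentially"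
      by (auto intro: Limsup_lessD)
    thus "eventually (\<lambda>n. max (X n) (Y n) < y) sequentially"
      by eventually_elim simp
  qed
qed

lemma liminf_min_ereal:
  fixes X Y :: "nat \<Rightarrow> ereal"
  shows "liminf (\<lambda>n. min (X n) (Y n)) = min (liminf X) (liminf Y)"
proof (rule antisym)
  show "liminf (\<lambda>n. min (X n) (Y n)) \<le> min (liminf X) (liminf Y)"
    by (intro min.boundedI Liminf_mono) auto
  show "min (liminf X) (liminf Y) \<le> liminf (\<lambda>n. min (X n) (Y n))"
    unfolding le_Liminf_iff
  proof (intro allI impI)
    fix y assume "y < min (liminf X) (liminf Y)"
    hence "eventually (\<lambda>n. y < X n) sequentially" "eventually (\<lambda>n. y < Y n) sequentially"
      by (auto intro: less_LiminfD)
    thus "eventually (\<lambda>n. y < min (X n) (Y n)) sequentially"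
      by eventually_elim simp
  qed
qed

lemma of_rat_max': "real_of_rat (max a b) = max (real_of_rat a) (real_of_rat b)"
  by (simp add: max_def of_rat_less_eq)
lemma of_rat_min': "real_of_rat (min a b) = min (real_of_rat a) (real_of_rat b)"
  by (simp add: min_def of_rat_less_eq)

lemma VS_prod: "LimSupVal (weight_seq (prodA max A1 A2) w (Phi (r1, r2))) =
   max (LimSupVal (weight_seq A1 w r1)) (LimSupVal (weight_seq A2 w r2))"
proof -
  have "(\<lambda>n. ereal (weight_seq (prodA max A1 A2) w (Phi (r1, r2)) n)) =
        (\<lambda>n. max (ereal (weight_seq A1 w r1 n)) (ereal (weight_seq A2 w r2 n)))"
    apply (rule ext) apply (subst weight_seq_prodA) by (simp add: of_rat_less_eq weight_seq_def max_def)
  thus ?thesis unfolding LimSupVal_def by (simp add: limsup_max_ereal)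
qed

lemma VI_prod: "LimInfVal (weight_seq (prodA min A1 A2) w (Phi (r1, r2))) =
   min (LimInfVal (weight_seq A1 w r1)) (LimInfVal (weight_seq A2 w r2))"
proof -
  have "(\<lambda>n. ereal (weight_seq (prodA min A1 A2) w (Phi (r1, r2)) n)) =
        (\<lambda>n. min (ereal (weight_seq A1 w r1 n)) (ereal (weight_seq A2 w r2 n)))"
    apply (rule ext) apply (subst weight_seq_prodA) by (simp add: of_rat_less_eq weight_seq_def min_def)
  thus ?thesis unfolding LimInfVal_def by (simp add: liminf_min_ereal)
qed

lemma prob_one_iff:
  assumes "prob_space M" "E \<in> sets M"
  shows "emeasure M E = 1 \<longleftrightarrow> emeasure M (space M - E) = 0"
proof -
  interpret prob_space M by fact
  have c: "prob (space M - E) = 1 - prob E" using assms(2) by (rule prob_compl)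
  have h1: "prob E \<le> 1" by (rule prob_le_1)
  have "emeasure M (space M - E) = 0 \<longleftrightarrow> 1 - prob E \<le> 0"
    by (simp add: emeasure_eq_measure ennreal_eq_0_iff c)
  also have "\<dots> \<longleftrightarrow> prob E = 1" using h1 by linarith
  finally show ?thesis by (simp add: emeasure_eq_measure)
qed



lemma pair_prob: "prob_space (run_measure A1 w \<Otimes>\<^sub>M run_measure A2 w)"
proof -
  interpret p1: prob_space "run_measure A1 w" by (rule prob_run_measure)
  interpret p2: prob_space "run_measure A2 w" by (rule prob_run_measure)
  interpret pair_prob_space "run_measure A1 w" "run_measure A2 w" ..
  show ?thesis by (rule P.prob_space_axioms)
qed

lemma emeasure_prodA:
  assumes "EA \<in> sets run_space"
  shows "emeasure (run_measure (prodA f A1 A2) w) EA =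
         emeasure (run_measure A1 w \<Otimes>\<^sub>M run_measure A2 w) (Phi -` EA)"
  unfolding run_measure_prodA
  by (simp add: emeasure_distr[OF Phi_meas assms] space_pair_measure)

lemma as_event_max:
  "emeasure (run_measure (prodA max A1 A2) w) {r \<in> space (run_measure (prodA max A1 A2) w). LimSupVal (weight_seq (prodA max A1 A2) w r) \<ge> ereal \<eta>} = 1
   \<longleftrightarrow> emeasure (run_measure A1 w) {r \<in> space (run_measure A1 w). LimSupVal (weight_seq A1 w r) \<ge> ereal \<eta>} = 1
     \<or> emeasure (run_measure A2 w) {r \<in> space (run_measure A2 w). LimSupVal (weight_seq A2 w r) \<ge> ereal \<eta>} = 1"
proof -
  let ?P = "run_measure A1 w \<Otimes>\<^sub>M run_measure A2 w"
  define E1 where "E1 = {r. ereal \<eta> \<le> LimSupVal (weight_seq A1 w r)}"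
  define E2 where "E2 = {r. ereal \<eta> \<le> LimSupVal (weight_seq A2 w r)}"
  define EA where "EA = {r. ereal \<eta> \<le> LimSupVal (weight_seq (prodA max A1 A2) w r)}"
  have s1: "E1 \<in> sets run_space" "E2 \<in> sets run_space" "EA \<in> sets run_space"
    unfolding E1_def E2_def EA_def by (rule Ev_setsS)+
  interpret p1: prob_space "run_measure A1 w" by (rule prob_run_measure)
  interpret p2: prob_space "run_measure A2 w" by (rule prob_run_measure)
  have sp: "space ?P = UNIV" by (simp add: space_pair_measure)
  have c1: "UNIV - E1 \<in> sets (run_measure A1 w)" "UNIV - E2 \<in> sets (run_measure A2 w)"
      using s1 sets.compl_sets[of _ run_space] by auto
  have pre: "Phi -` EA = space ?P - ((UNIV - E1) \<times> (UNIV - E2))"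
    unfolding sp by (auto simp: EA_def E1_def E2_def VS_prod le_max_iff_disj)
  have "emeasure (run_measure (prodA max A1 A2) w) EA = 1 \<longleftrightarrow> emeasure ?P (Phi -` EA) = 1"
    by (simp add: emeasure_prodA[OF s1(3)])
  also have "\<dots> \<longleftrightarrow> emeasure ?P (space ?P - (Phi -` EA)) = 0"
  proof (rule prob_one_iff[OF pair_prob])
    have "(UNIV - E1) \<times> (UNIV - E2) \<in> sets ?P" by (rule pair_measureI[OF c1])
    thus "Phi -` EA \<in> sets ?P" unfolding pre by (rule sets.compl_sets)
  qed
  also have "space ?P - (Phi -` EA) = (UNIV - E1) \<times> (UNIV - E2)"
    unfolding pre sp by auto
  also have "emeasure ?P ((UNIV - E1) \<times> (UNIV - E2)) = emeasure (run_measure A1 w) (UNIV - E1) * emeasure (run_measure A2 w) (UNIV - E2)"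
    by (rule p2.emeasure_pair_measure_Times[OF c1])
  also have "\<dots> = 0 \<longleftrightarrow> emeasure (run_measure A1 w) (UNIV - E1) = 0 \<or> emeasure (run_measure A2 w) (UNIV - E2) = 0"
    by simp
  also have "\<dots> \<longleftrightarrow> emeasure (run_measure A1 w) E1 = 1 \<or> emeasure (run_measure A2 w) E2 = 1"
    using prob_one_iff[OF prob_run_measure, of E1 A1 w] prob_one_iff[OF prob_run_measure, of E2 A2 w] s1
    by simp
  finally show ?thesis by (simp add: E1_def E2_def EA_def)
qed

lemma pos_event_min:
  "emeasure (run_measure (prodA min A1 A2) w) {r \<in> space (run_measure (prodA min A1 A2) w). LimInfVal (weight_seq (prodA min A1 A2) w r) \<ge> ereal \<eta>} > 0
   \<longleftrightarrow> emeasure (run_measure A1 w) {r \<in> space (run_measure A1 w). LimInfVal (weight_seq A1 w r) \<ge> ereal \<eta>} > 0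
     \<and> emeasure (run_measure A2 w) {r \<in> space (run_measure A2 w). LimInfVal (weight_seq A2 w r) \<ge> ereal \<eta>} > 0"
proof -
  let ?P = "run_measure A1 w \<Otimes>\<^sub>M run_measure A2 w"
  define E1 where "E1 = {r. ereal \<eta> \<le> LimInfVal (weight_seq A1 w r)}"
  define E2 where "E2 = {r. ereal \<eta> \<le> LimInfVal (weight_seq A2 w r)}"
  define EA where "EA = {r. ereal \<eta> \<le> LimInfVal (weight_seq (prodA min A1 A2) w r)}"
  have s1: "E1 \<in> sets run_space" "E2 \<in> sets run_space" "EA \<in> sets run_space"
    unfolding E1_def E2_def EA_def by (rule Ev_setsI)+
  interpret p2: prob_space "run_measure A2 w" by (rule prob_run_measure)
  have pre: "Phi -` EA = E1 \<times> E2"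
    by (auto simp: EA_def E1_def E2_def VI_prod)
  have "emeasure (run_measure (prodA min A1 A2) w) EA = emeasure (run_measure A1 w) E1 * emeasure (run_measure A2 w) E2"
    unfolding emeasure_prodA[OF s1(3)] pre
    by (rule p2.emeasure_pair_measure_Times) (use s1 in auto)
  thus ?thesis by (simp add: E1_def E2_def EA_def ennreal_zero_less_mult_iff)
qed



lemma Sup_inter_down:
  fixes S T :: "real set"
  assumes dS: "\<And>x y. x \<in> S \<Longrightarrow> y \<le> x \<Longrightarrow> y \<in> S"
      and dT: "\<And>x y. x \<in> T \<Longrightarrow> y \<le> x \<Longrightarrow> y \<in> T"
  shows "Sup (ereal ` (S \<inter> T)) = min (Sup (ereal ` S)) (Sup (ereal ` T))"
proof (cases "S \<subseteq> T")
  case True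
  hence "S \<inter> T = S" by auto
  moreover have "Sup (ereal ` S) \<le> Sup (ereal ` T)" using True by (intro Sup_subset_mono image_mono)
  ultimately show ?thesis by (simp add: min_absorb1)
next
  case False
  then obtain x where x: "x \<in> S" "x \<notin> T" by auto
  have "T \<subseteq> S"
  proof
    fix y assume y: "y \<in> T"
    have "y \<le> x" using dT[OF y, of x] x(2) by force
    thus "y \<in> S" using dS[OF x(1)] by simp
  qed
  hence "S \<inter> T = T" by auto
  moreover have "Sup (ereal ` T) \<le> Sup (ereal ` S)" using \<open>T \<subseteq> S\<close> by (intro Sup_subset_mono image_mono)
  ultimately show ?thesis by (simp add: min_absorb2)
qed

lemma Sup_conj_down:
  fixes P Q :: "real \<Rightarrow> bool"
  assumes dS: "\<And>x y. P x \<Longrightarrow> y \<le> x \<Longrightarrow> P y"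
      and dT: "\<And>x y. Q x \<Longrightarrow> y \<le> x \<Longrightarrow> Q y"
  shows "Sup (ereal ` {x. P x \<and> Q x}) = min (Sup (ereal ` {x. P x})) (Sup (ereal ` {x. Q x}))"
proof -
  have "{x. P x \<and> Q x} = {x. P x} \<inter> {x. Q x}" by auto
  thus ?thesis using Sup_inter_down[of "{x. P x}" "{x. Q x}"] dS dT by auto
qed

lemma lang_as_max:
  "lang_as LimSupVal (prodA max A1 A2) w = max (lang_as LimSupVal A1 w) (lang_as LimSupVal A2 w)"
  unfolding lang_as_def as_event_max
  by (simp add: Collect_disj_eq image_Un Sup_union_distrib sup_max)

lemma pos_down:
  assumes "emeasure (run_measure A w) {r \<in> space (run_measure A w). LimInfVal (weight_seq A w r) \<ge> ereal x} > 0"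
    and "y \<le> x"
  shows "emeasure (run_measure A w) {r \<in> space (run_measure A w). LimInfVal (weight_seq A w r) \<ge> ereal y} > 0"
proof -
  have sub: "{r. ereal x \<le> LimInfVal (weight_seq A w r)} \<subseteq> {r. ereal y \<le> LimInfVal (weight_seq A w r)}"
  proof
    fix r assume "r \<in> {r. ereal x \<le> LimInfVal (weight_seq A w r)}"
    moreover have "ereal y \<le> ereal x" using assms(2) by simp
    ultimately show "r \<in> {r. ereal y \<le> LimInfVal (weight_seq A w r)}"
      using order_trans[of "ereal y" "ereal x" "LimInfVal (weight_seq A w r)"] by simp
  qed
  have "{r. ereal y \<le> LimInfVal (weight_seq A w r)} \<in> sets (run_measure A w)"
    using Ev_setsI by simp
  from emeasure_mono[OF sub this] assms(1) show ?thesis by (auto intro: less_le_trans)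
qed

lemma lang_pos_min:
  "lang_pos LimInfVal (prodA min A1 A2) w = min (lang_pos LimInfVal A1 w) (lang_pos LimInfVal A2 w)"
  unfolding lang_pos_def pos_event_min
  by (rule Sup_conj_down) (rule pos_down; assumption)+

theorem lemma17:
  shows "(\<forall>A1 A2 :: ('a::finite) pwa. wf_pwa A1 \<and> wf_pwa A2 \<longrightarrow>
            (\<exists>A :: 'a pwa. wf_pwa A \<and>
               (\<forall>w. lang_as LimSupVal A w = max (lang_as LimSupVal A1 w) (lang_as LimSupVal A2 w))))
       \<and> (\<forall>A1 A2 :: ('a::finite) pwa. wf_pwa A1 \<and> wf_pwa A2 \<longrightarrow>
            (\<exists>A :: 'a pwa. wf_pwa A \<and>
               (\<forall>w. lang_pos LimInfVal A w = min (lang_pos LimInfVal A1 w) (lang_pos LimInfVal A2 w))))"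
proof (intro conjI allI impI)
  fix A1 A2 :: "'a pwa" assume "wf_pwa A1 \<and> wf_pwa A2"
  thus "\<exists>A :: 'a pwa. wf_pwa A \<and>
               (\<forall>w. lang_as LimSupVal A w = max (lang_as LimSupVal A1 w) (lang_as LimSupVal A2 w))"
    by (intro exI[of _ "prodA max A1 A2"]) (simp add: wf_prodA lang_as_max)
next
  fix A1 A2 :: "'a pwa" assume "wf_pwa A1 \<and> wf_pwa A2"
  thus "\<exists>A :: 'a pwa. wf_pwa A \<and>
               (\<forall>w. lang_pos LimInfVal A w = min (lang_pos LimInfVal A1 w) (lang_pos LimInfVal A2 w))"
    by (intro exI[of _ "prodA min A1 A2"]) (simp add: wf_prodA lang_pos_min)
qed

end
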